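(* Fix an integer $s\geqslant 2$. For every integer $n\geqslant 2$ let $\overline X_{n,s}$ be the fraction of the $n$ fluids that flow from the centre to the boundary, for a uniformly random coloring in $\Omega_{n,s}$. Let $p_s$ be the flowing probability of a single fluid. Then, as $n\to\infty$, the distribution function of the random variable \[\frac{\sqrt{n}\,(\overline X_{n,s}-p_s)}{\sqrt{p_s(1-p_s)}}\] converges uniformly on $\mathbb R$ to the standard normal distribution function. All these objects are defined in the context.
   Context: Consider the tiling of the plane by regular hexagons of side $1$, called cells. For an integer $s\geqslant2$, fix a cell $O$. Let $M_s$ be the set of all cells lying inside the regular hexagon that is centred at the centre of $O$, has sides of length $s\sqrt3$, and has its sides perpendicular to sides of the cells. The set $M_s$ has $m+1=1+3s(s-1)$ cells. Number the cells other than $O$ as $v_1,\dots,v_m$. Two cells are neighbours if they share a side. A cell of $M_s$ is a boundary cell if it has fewer than six neighbours in $M_s$. For an integer $n\geqslant2$, let $\Omega_{n,s}$ be the set of $n$-tuples $f=(f_1,\dots,f_n)$ of functions $f_i:\{v_1,\dots,v_m\}\to\{0,1\}$ such that $f_1+\dots+f_n\equiv1\pmod 2$ at every cell. These are colorings in $2^{n-1}$ colors. Equip $\Omega_{n,s}$ with the uniform probability measure $P(A)=|A|\,2^{-(n-1)m}$. A path from the centre to the boundary is a sequence of pairwise distinct cells $v_{j_1},\dots,v_{j_t}$ with the following properties: - $v_{j_1}$ is a neighbour of $O$; - $v_{j_l}$ and $v_{j_{l+1}}$ are neighbours for each $l$; - $v_{j_t}$ is a boundary cell. The $i$-th fluid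 flows from the centre to the boundary for $f$ if there is such a path with $f_i(v_{j_l})=1$ for all $l$. Let $A_{n,s,i}$ be this event. Let $X_{n,s,i}$ be its indicator, and set $\overline X_{n,s}=\frac1n\sum_{i=1}^nX_{n,s,i}$. The probability $P(A_{n,s,i})$ does not depend on $n$ or $i$; denote it by $p_s$ (for instance $p_s=P(A_{2,s,1})$). *)

theory Defs
  imports "HOL-Probability.Probability"
begin

text \<open>Cells of the hexagonal tiling are indexed by axial coordinates in int x int.
  The six neighbours of (a,b) are (a+-1,b), (a,b+-1), (a+1,b-1), (a-1,b+1).
  The hexagonal (graph) distance of (a,b) from the origin is max |a| |b| |a+b|.\<close>

type_synonym cell = "int \<times> int"

definition hexnorm :: "cell \<Rightarrow> int" where
  "hexnorm c = max \<bar>fst c\<bar> (max \<bar>snd c\<bar> \<bar>fst c + snd c\<bar>)"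

definition nbr :: "cell \<Rightarrow> cell \<Rightarrow> bool" where
  "nbr c d \<longleftrightarrow> hexnorm (fst d - fst c, snd d - snd c) = 1"

definition O_cell :: cell where "O_cell = (0, 0)"

text \<open>M_s: the cells inside the big hexagon, i.e. at hexagonal distance at most s-1 from O
  (it has 1 + 3 s (s-1) cells).\<close>
definition Mcells :: "nat \<Rightarrow> cell set" where
  "Mcells s = {c. hexnorm c \<le> int s - 1}"

definition Vcells :: "nat \<Rightarrow> cell set" where
  "Vcells s = Mcells s - {O_cell}"

definition boundary_cell :: "nat \<Rightarrow> cell \<Rightarrow> bool" where
  "boundary_cell s v \<longleftrightarrow> v \<in> Mcells s \<and> card {w \<in> Mcells s. nbr v w} < 6"

text \<open>Omega_{n,s}: n-tuples (indexed by fluids 0..n-1) of 0/1 functions on v_1..v_m whose sum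
  is odd at every cell; represented as extensional boolean functions (False outside).\<close>
definition Omega :: "nat \<Rightarrow> nat \<Rightarrow> (nat \<Rightarrow> cell \<Rightarrow> bool) set" where
  "Omega n s = {f. (\<forall>i v. (i \<ge> n \<or> v \<notin> Vcells s) \<longrightarrow> \<not> f i v) \<and>
                   (\<forall>v \<in> Vcells s. odd (card {i. i < n \<and> f i v}))}"

definition path_to_boundary :: "nat \<Rightarrow> cell list \<Rightarrow> bool" where
  "path_to_boundary s ps \<longleftrightarrow> ps \<noteq> [] \<and> distinct ps \<and> set ps \<subseteq> Vcells s \<and>
     nbr O_cell (hd ps) \<and> (\<forall>j. Suc j < length ps \<longrightarrow> nbr (ps ! j) (ps ! Suc j)) \<and>
     boundary_cell s (last ps)"

definition flows :: "nat \<Rightarrow> (nat \<Rightarrow> cell \<Rightarrow> bool) \<Rightarrow> nat \<Rightarrow> bool" where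
  "flows s f i \<longleftrightarrow> (\<exists>ps. path_to_boundary s ps \<and> (\<forall>v \<in> set ps. f i v))"

definition Pu :: "nat \<Rightarrow> nat \<Rightarrow> (nat \<Rightarrow> cell \<Rightarrow> bool) pmf" where
  "Pu n s = pmf_of_set (Omega n s)"

text \<open>p_s = P(A_{2,s,1}) (fluids indexed from 0, so fluid 1 is index 0).\<close>
definition p_flow :: "nat \<Rightarrow> real" where
  "p_flow s = measure_pmf.prob (Pu 2 s) {f. flows s f 0}"

definition Xbar :: "nat \<Rightarrow> nat \<Rightarrow> (nat \<Rightarrow> cell \<Rightarrow> bool) \<Rightarrow> real" where
  "Xbar n s f = (1 / real n) * (\<Sum>i<n. if flows s f i then 1 else 0)"

definition Zn :: "nat \<Rightarrow> nat \<Rightarrow> (nat \<Rightarrow> cell \<Rightarrow> bool) \<Rightarrow> real" where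
  "Zn n s f = sqrt (real n) * (Xbar n s f - p_flow s) / sqrt (p_flow s * (1 - p_flow s))"

definition Fn :: "nat \<Rightarrow> nat \<Rightarrow> real \<Rightarrow> real" where
  "Fn n s x = measure_pmf.prob (Pu n s) {f. Zn n s f \<le> x}"

end

theory Submission
  imports Defs
begin


lemma hexnorm_one: "hexnorm (a,b) = 1 \<longleftrightarrow> (a,b) \<in> {(1,0),(-1,0),(0,1),(0,-1),(1,-1),(-1,1)}"
proof
  assume "hexnorm (a,b) = 1"
  hence h: "\<bar>a\<bar> \<le> 1" "\<bar>b\<bar> \<le> 1" "\<bar>a+b\<bar> \<le> 1" "\<bar>a\<bar> = 1 \<or> \<bar>b\<bar> = 1 \<or> \<bar>a+b\<bar> = 1"
    unfolding hexnorm_def by (auto simp: max_def split: if_splits)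
  have "a \<in> {-1,0,1}" "b \<in> {-1,0,1}" using h(1,2) by auto
  thus "(a,b) \<in> {(1,0),(-1,0),(0,1),(0,-1),(1,-1),(-1,1)}" using h(3,4) by auto
next
  assume "(a,b) \<in> {(1,0),(-1,0),(0,1),(0,-1),(1,-1),(-1,1)}"
  thus "hexnorm (a,b) = 1" by (auto simp: hexnorm_def)
qed

lemma nbr_iff0: "nbr (a,b) (c,d) \<longleftrightarrow> (c-a, d-b) \<in> {(1,0),(-1,0),(0,1),(0,-1),(1,-1),(-1,1)}"
    unfolding nbr_def fst_conv snd_conv by (rule hexnorm_one)
lemma nbr_iff1: fixes a b c d :: int shows "(c-a, d-b) \<in> {(1,0),(-1,0),(0,1),(0,-1),(1,-1),(-1,1)} \<longleftrightarrow> (c,d) \<in> {(a+1,b),(a-1,b),(a,b+1),(a,b-1),(a+1,b-1),(a-1,b+1)}"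
  proof -
    have e: "\<And>x::int. (c - a = x) = (c = a + x)" "\<And>x::int. (d - b = x) = (d = b + x)" by auto
    show ?thesis by (simp only: insert_iff prod.inject singleton_iff empty_iff e) simp
  qed

lemma nbr_iff: "nbr (a,b) w \<longleftrightarrow> w \<in> {(a+1,b),(a-1,b),(a,b+1),(a,b-1),(a+1,b-1),(a-1,b+1)}"
  by (cases w) (simp only: nbr_iff0 nbr_iff1)

lemma finite_Mcells: "finite (Mcells s)"
proof -
  have "Mcells s \<subseteq> {-int s..int s} \<times> {-int s..int s}"
  proof
    fix c assume "c \<in> Mcells s"
    hence h: "hexnorm c \<le> int s - 1" by (simp add: Mcells_def)
    have "\<bar>fst c\<bar> \<le> hexnorm c" "\<bar>snd c\<bar> \<le> hexnorm c" by (simp_all add: hexnorm_def)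
    with h show "c \<in> {-int s..int s} \<times> {-int s..int s}" by (cases c) auto
  qed
  thus ?thesis by (rule finite_subset) auto
qed

lemma finite_Vcells: "finite (Vcells s)"
  using finite_Mcells by (simp add: Vcells_def)

lemma boundary_last:
  assumes "s \<ge> 2"
  shows "boundary_cell s (int s - 1, 0)"
proof -
  define a where "a = int s - 1"
  define L :: "cell list" where "L = [(a-1,0),(a,0+1),(a,0-1),(a+1,0-1),(a-1,0+1)]"
  have notM: "(a + 1, 0) \<notin> Mcells s" by (simp add: Mcells_def hexnorm_def a_def)
  have sub: "{w \<in> Mcells s. nbr (a,0) w} \<subseteq> set L"
  proof
    fix w assume w: "w \<in> {w \<in> Mcells s. nbr (a,0) w}"
    hence "w \<in> {(a+1,0),(a-1,0),(a,0+1),(a,0-1),(a+1,0-1),(a-1,0+1)}"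
      by (simp only: mem_Collect_eq nbr_iff)
    moreover have "w \<noteq> (a+1,0)" using w notM by blast
    ultimately show "w \<in> set L" unfolding L_def
      by (simp only: insert_iff set_simps empty_iff simp_thms)
  qed
  have c1: "card {w \<in> Mcells s. nbr (a,0) w} \<le> card (set L)"
    using card_mono[OF finite_set sub] .
  have c2: "card (set L) \<le> length L" by (rule card_length)
  have c3: "length L = 5" by (simp add: L_def)
  have "card {w \<in> Mcells s. nbr (a,0) w} < 6" using c1 c2 c3 by linarith
  moreover have "(a,0) \<in> Mcells s" using assms by (simp add: Mcells_def hexnorm_def a_def)
  ultimately show ?thesis by (simp add: boundary_cell_def a_def)
qed


definition straight :: "nat \<Rightarrow> cell list" where
  "straight s = map (\<lambda>j. (int j + 1, 0)) [0..<s-1]"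

lemma straight_nth: "j < s - 1 \<Longrightarrow> straight s ! j = (int j + 1, 0)"
  by (simp add: straight_def)

lemma length_straight: "length (straight s) = s - 1"
  by (simp add: straight_def)

lemma path_straight:
  assumes "s \<ge> 2"
  shows "path_to_boundary s (straight s)"
proof -
  have ne: "straight s \<noteq> []" using assms by (simp add: straight_def)
  have d: "distinct (straight s)" by (simp add: straight_def distinct_map inj_on_def)
  have sub: "set (straight s) \<subseteq> Vcells s"
  proof
    fix v assume "v \<in> set (straight s)"
    then obtain j where j: "j < s - 1" "v = (int j + 1, 0)"
      by (auto simp: straight_def)
    have "hexnorm v = int j + 1" using j(2) by (simp add: hexnorm_def)
    moreover have "int j + 1 \<le> int s - 1" using j(1) by linarith
    ultimately show "v \<in> Vcells s" using j(2) by (simp add: Vcells_def Mcells_def O_cell_def)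
  qed
  have hd: "hd (straight s) = (1,0)" using assms by (simp add: hd_conv_nth straight_nth ne)
  have "nbr O_cell (1,0)" by (simp add: nbr_def O_cell_def hexnorm_def)
  moreover have "\<forall>j. Suc j < length (straight s) \<longrightarrow> nbr (straight s ! j) (straight s ! Suc j)"
  proof (intro allI impI)
    fix j assume "Suc j < length (straight s)"
    hence "j < s - 1" "Suc j < s - 1" by (simp_all add: length_straight)
    hence "straight s ! j = (int j + 1, 0)" "straight s ! Suc j = (int j + 1 + 1, 0)"
      by (simp_all add: straight_nth)
    thus "nbr (straight s ! j) (straight s ! Suc j)" by (simp only: nbr_iff) simp
  qed
  moreover have "last (straight s) = (int s - 1, 0)"
  proof -
    have L: "length (straight s) - 1 = s - 2" by (simp add: length_straight)
    have "last (straight s) = straight s ! (s - 2)" using ne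
      by (subst last_conv_nth[OF ne]) (simp only: L)
    also have "\<dots> = (int (s-2) + 1, 0)" using assms by (simp add: straight_nth)
    also have "\<dots> = (int s - 1, 0)" using assms by simp
    finally show ?thesis .
  qed
  ultimately show ?thesis using ne d sub hd boundary_last[OF assms]
    by (simp add: path_to_boundary_def)
qed




definition Gs :: "nat \<Rightarrow> (cell \<Rightarrow> bool) set" where
  "Gs s = {g. \<forall>v. v \<notin> Vcells s \<longrightarrow> \<not> g v}"

lemma finite_Gs: "finite (Gs s)"
proof -
  have "Gs s \<subseteq> (\<lambda>A v. v \<in> A) ` Pow (Vcells s)"
  proof
    fix g assume g: "g \<in> Gs s"
    have "g = (\<lambda>v. v \<in> {v. g v})" by simp
    moreover have "{v. g v} \<in> Pow (Vcells s)" using g by (auto simp: Gs_def)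
    ultimately show "g \<in> (\<lambda>A v. v \<in> A) ` Pow (Vcells s)" by blast
  qed
  thus ?thesis by (rule finite_subset) (simp add: finite_Vcells)
qed

lemma Gs_ne: "Gs s \<noteq> {}"
  by (auto simp: Gs_def)

definition flow1 :: "nat \<Rightarrow> (cell \<Rightarrow> bool) \<Rightarrow> bool" where
  "flow1 s g \<longleftrightarrow> (\<exists>ps. path_to_boundary s ps \<and> (\<forall>v \<in> set ps. g v))"

lemma flows_eq: "flows s f i = flow1 s (f i)"
  by (simp add: flows_def flow1_def)

lemma card_less_Suc:
  "card {i. i < Suc k \<and> P i} = card {i. i < k \<and> P i} + (if P k then 1 else 0)"
proof (cases "P k")
  case True
  have "{i. i < Suc k \<and> P i} = insert k {i. i < k \<and> P i}" using True by auto
  thus ?thesis using True by simp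
next
  case False
  have "{i. i < Suc k \<and> P i} = {i. i < k \<and> P i}" using False less_Suc_eq by auto
  thus ?thesis using False by simp
qed

lemma restrict_Omega_image:
  assumes "n = Suc k"
  shows "(\<lambda>f. restrict f {..<k}) ` Omega n s = PiE_dflt {..<k} undefined (\<lambda>_. Gs s)"
proof (intro equalityI subsetI)
  fix h assume "h \<in> (\<lambda>f. restrict f {..<k}) ` Omega n s"
  then obtain f where f: "f \<in> Omega n s" "h = restrict f {..<k}" by blast
  show "h \<in> PiE_dflt {..<k} undefined (\<lambda>_. Gs s)"
    using f by (auto simp: PiE_dflt_def Gs_def Omega_def)
next
  fix h assume h: "h \<in> PiE_dflt {..<k} undefined (\<lambda>_. Gs s)"
  define f where "f = (\<lambda>i. if i < k then h i else if i = k then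
     (\<lambda>v. v \<in> Vcells s \<and> even (card {j. j < k \<and> h j v})) else (\<lambda>_. False))"
  have hG: "\<And>i v. i < k \<Longrightarrow> v \<notin> Vcells s \<Longrightarrow> \<not> h i v"
    using h by (auto simp: PiE_dflt_def Gs_def)
  have "f \<in> Omega n s"
    unfolding Omega_def
  proof (intro CollectI conjI allI impI ballI)
    fix i v assume A: "n \<le> i \<or> v \<notin> Vcells s"
    show "\<not> f i v"
    proof (cases "i < k")
      case True
      hence "v \<notin> Vcells s" using A assms by auto
      thus ?thesis using hG[OF True] True by (simp add: f_def)
    next
      case False
      thus ?thesis using A assms by (auto simp: f_def)
    qed
  next
    fix v assume v: "v \<in> Vcells s"
    have e: "{i. i < k \<and> f i v} = {i. i < k \<and> h i v}" by (auto simp: f_def)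
    have "card {i. i < n \<and> f i v} = card {i. i < k \<and> h i v} + (if f k v then 1 else 0)"
      using card_less_Suc[of k "\<lambda>i. f i v"] e assms by simp
    moreover have "f k v \<longleftrightarrow> even (card {j. j < k \<and> h j v})" using v by (simp add: f_def)
    ultimately show "odd (card {i. i < n \<and> f i v})" by auto
  qed
  moreover have "h = restrict f {..<k}"
    using h by (auto simp: f_def PiE_dflt_def restrict_def)
  ultimately show "h \<in> (\<lambda>f. restrict f {..<k}) ` Omega n s" by blast
qed

lemma inj_restrict_Omega:
  assumes "n = Suc k"
  shows "inj_on (\<lambda>f. restrict f {..<k}) (Omega n s)"
proof (rule inj_onI)
  fix f f' assume f: "f \<in> Omega n s" and f': "f' \<in> Omega n s"
    and eq: "restrict f {..<k} = restrict f' {..<k}"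
  have low: "\<And>i. i < k \<Longrightarrow> f i = f' i"
    using eq by (metis lessThan_iff restrict_apply')
  show "f = f'"
  proof (intro ext)
    fix i v
    show "f i v = f' i v"
    proof (cases "i < k")
      case True thus ?thesis using low by simp
    next
      case False
      show ?thesis
      proof (cases "i = k \<and> v \<in> Vcells s")
        case True
        have e: "{i. i < k \<and> f i v} = {i. i < k \<and> f' i v}" using low by auto
        have c1: "card {i. i < n \<and> f i v} = card {i. i < k \<and> f i v} + (if f k v then 1 else 0)"
          using card_less_Suc[of k "\<lambda>i. f i v"] assms by simp
        have c2: "card {i. i < n \<and> f' i v} = card {i. i < k \<and> f i v} + (if f' k v then 1 else 0)"
          using card_less_Suc[of k "\<lambda>i. f' i v"] assms e by simp
        have "odd (card {i. i < n \<and> f i v})" "odd (card {i. i < n \<and> f' i v})"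
          using f f' True by (auto simp: Omega_def)
        hence "f k v = f' k v" using c1 c2 by (auto split: if_splits)
        thus ?thesis using True by simp
      next
        case False
        hence "n \<le> i \<or> v \<notin> Vcells s" using \<open>\<not> i < k\<close> assms by auto
        hence "\<not> f i v" "\<not> f' i v" using f f' unfolding Omega_def by blast+
        thus ?thesis by simp
      qed
    qed
  qed
qed

lemma finite_Omega: "n = Suc k \<Longrightarrow> finite (Omega n s)"
  using inj_on_finite[OF inj_restrict_Omega, of n k s] restrict_Omega_image[of n k s]
    finite_PiE_dflt[of "{..<k}" "\<lambda>_. Gs s" undefined] finite_Gs by auto

lemma Omega_ne: "n = Suc k \<Longrightarrow> Omega n s \<noteq> {}"
proof
  assume "n = Suc k" "Omega n s = {}"
  hence "PiE_dflt {..<k} undefined (\<lambda>_. Gs s) = {}"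
    using restrict_Omega_image[of n k s] by simp
  thus False using Gs_ne[of s] by simp
qed

lemma marg:
  assumes "n = Suc k"
  shows "map_pmf (\<lambda>f. restrict f {..<k}) (Pu n s) = Pi_pmf {..<k} undefined (\<lambda>_. pmf_of_set (Gs s))"
proof -
  have "map_pmf (\<lambda>f. restrict f {..<k}) (Pu n s) = pmf_of_set ((\<lambda>f. restrict f {..<k}) ` Omega n s)"
    unfolding Pu_def
    by (rule map_pmf_of_set_inj[OF inj_restrict_Omega[OF assms] Omega_ne[OF assms] finite_Omega[OF assms]])
  also have "\<dots> = pmf_of_set (PiE_dflt {..<k} undefined (\<lambda>_. Gs s))"
    using restrict_Omega_image[OF assms] by simp
  also have "\<dots> = Pi_pmf {..<k} undefined (\<lambda>_. pmf_of_set (Gs s))"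
    by (rule Pi_pmf_of_set[symmetric]) (auto simp: finite_Gs Gs_ne)
  finally show ?thesis .
qed

lemma component:
  assumes "n = Suc k" "i < k"
  shows "map_pmf (\<lambda>f. f i) (Pu n s) = pmf_of_set (Gs s)"
proof -
  have "map_pmf (\<lambda>f. f i) (Pu n s) = map_pmf (\<lambda>h. h i) (map_pmf (\<lambda>f. restrict f {..<k}) (Pu n s))"
    using assms(2) by (simp add: pmf.map_comp o_def)
  also have "\<dots> = pmf_of_set (Gs s)"
    using assms by (simp add: marg Pi_pmf_component)
  finally show ?thesis .
qed

definition qf :: "nat \<Rightarrow> real" where
  "qf s = measure_pmf.prob (pmf_of_set (Gs s)) {g. flow1 s g}"

lemma p_flow_eq: "p_flow s = qf s"
proof -
  have "p_flow s = measure_pmf.prob (map_pmf (\<lambda>f. f 0) (Pu 2 s)) {g. flow1 s g}"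
    by (simp add: p_flow_def flows_eq)
  also have "\<dots> = qf s" using component[of 2 1 0 s] by (simp add: qf_def)
  finally show ?thesis .
qed

lemma qf_bounds:
  assumes "s \<ge> 2"
  shows "0 < qf s" "qf s < 1"
proof -
  let ?G = "Gs s" and ?F = "{g. flow1 s g}"
  have fin: "finite ?G" by (rule finite_Gs)
  have q: "qf s = card (?G \<inter> ?F) / card ?G"
    unfolding qf_def by (rule measure_pmf_of_set[OF Gs_ne fin])
  define g1 where "g1 = (\<lambda>v. v \<in> Vcells s)"
  have g1: "g1 \<in> ?G \<inter> ?F"
    using path_straight[OF assms] unfolding g1_def
    by (auto simp: Gs_def flow1_def path_to_boundary_def)
  have nf: "\<not> flow1 s (\<lambda>_. False)"
  proof
    assume "flow1 s (\<lambda>_. False)"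
    then obtain ps where "path_to_boundary s ps" "\<forall>v\<in>set ps. False" unfolding flow1_def by blast
    thus False by (cases ps) (auto simp: path_to_boundary_def)
  qed
  have g0: "(\<lambda>_. False) \<in> ?G - ?F"
    using nf by (auto simp: Gs_def)
  have c1: "card (?G \<inter> ?F) > 0" using g1 fin by (auto simp: card_gt_0_iff)
  have c2: "card (?G \<inter> ?F) < card ?G"
    by (rule psubset_card_mono[OF fin]) (use g0 in blast)
  show "0 < qf s" using q c1 c2 by simp
  show "qf s < 1" using q c1 c2 by simp
qed

lemma bern:
  assumes "s \<ge> 2"
  shows "map_pmf (flow1 s) (pmf_of_set (Gs s)) = bernoulli_pmf (qf s)"
proof (rule pmf_eqI)
  fix b :: bool
  have q: "0 \<le> qf s" "qf s \<le> 1" using qf_bounds[OF assms] by auto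
  show "pmf (map_pmf (flow1 s) (pmf_of_set (Gs s))) b = pmf (bernoulli_pmf (qf s)) b"
  proof (cases b)
    case True
    have "flow1 s -` {True} = {g. flow1 s g}" by auto
    thus ?thesis using True q by (simp add: pmf_map qf_def)
  next
    case False
    have "flow1 s -` {False} = UNIV - {g. flow1 s g}" by auto
    moreover have "measure_pmf.prob (pmf_of_set (Gs s)) (space (measure_pmf (pmf_of_set (Gs s))) - {g. flow1 s g})
       = 1 - measure_pmf.prob (pmf_of_set (Gs s)) {g. flow1 s g}"
      by (rule measure_pmf.prob_compl) simp
    ultimately have "pmf (map_pmf (flow1 s) (pmf_of_set (Gs s))) False = 1 - qf s"
      by (simp add: pmf_map qf_def)
    thus ?thesis using False q by simp
  qed
qed

lemma vec:
  assumes "s \<ge> 2" "n = Suc k"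
  shows "map_pmf (\<lambda>f. flow1 s \<circ> restrict f {..<k}) (Pu n s) =
         Pi_pmf {..<k} (flow1 s undefined) (\<lambda>_. bernoulli_pmf (qf s))"
proof -
  have "map_pmf (\<lambda>f. flow1 s \<circ> restrict f {..<k}) (Pu n s) =
        map_pmf (\<lambda>h. flow1 s \<circ> h) (map_pmf (\<lambda>f. restrict f {..<k}) (Pu n s))"
    by (simp add: pmf.map_comp o_def)
  also have "\<dots> = map_pmf (\<lambda>h. flow1 s \<circ> h) (Pi_pmf {..<k} undefined (\<lambda>_. pmf_of_set (Gs s)))"
    using assms by (simp add: marg)
  also have "\<dots> = Pi_pmf {..<k} (flow1 s undefined) (\<lambda>_. map_pmf (flow1 s) (pmf_of_set (Gs s)))"
    by (rule Pi_pmf_map[symmetric]) auto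
  also have "\<dots> = Pi_pmf {..<k} (flow1 s undefined) (\<lambda>_. bernoulli_pmf (qf s))"
    using bern[OF assms(1)] by simp
  finally show ?thesis .
qed

lemma prob_sum:
  assumes "s \<ge> 2" "n = Suc k"
  shows "measure_pmf.prob (Pu n s) {f. (\<Sum>i<k. of_bool (flows s f i) :: real) \<le> c} =
         measure_pmf.prob (Pi_pmf {..<k} (flow1 s undefined) (\<lambda>_. bernoulli_pmf (qf s)))
            {h. (\<Sum>i<k. of_bool (h i) :: real) \<le> c}"
proof -
  have "(\<lambda>f. flow1 s \<circ> restrict f {..<k}) -` {h. (\<Sum>i<k. of_bool (h i) :: real) \<le> c}
        = {f. (\<Sum>i<k. of_bool (flows s f i) :: real) \<le> c}"
  proof (rule set_eqI)
    fix f
    have e: "(\<Sum>i<k. of_bool ((flow1 s \<circ> restrict f {..<k}) i)::real) = (\<Sum>i<k. of_bool (flows s f i))"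
      by (intro sum.cong refl) (simp add: flows_eq)
    show "f \<in> (\<lambda>f. flow1 s \<circ> restrict f {..<k}) -` {h. (\<Sum>i<k. of_bool (h i) :: real) \<le> c} \<longleftrightarrow>
          f \<in> {f. (\<Sum>i<k. of_bool (flows s f i) :: real) \<le> c}"
      using e by (simp only: vimage_eq mem_Collect_eq)
  qed
  thus ?thesis using vec[OF assms, symmetric] by simp
qed




definition Mq :: "real \<Rightarrow> (nat \<Rightarrow> bool) measure" where
  "Mq q = PiM UNIV (\<lambda>_. measure_pmf (bernoulli_pmf q))"

lemma pps: "product_prob_space (\<lambda>_::nat. measure_pmf (bernoulli_pmf q))"
  by (rule product_prob_spaceI) (rule measure_pmf.prob_space_axioms)

lemma ps_Mq: "prob_space (Mq q)"
  unfolding Mq_def by (rule prob_space_PiM) (rule measure_pmf.prob_space_axioms)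

lemma restrict_Collect_aux: "A \<inter> Collect (restrict x A) = A \<inter> Collect x"
  by auto

lemma bridge:
  assumes k: "0 < k"
  shows "measure (Mq q) {\<omega> \<in> space (Mq q). (\<Sum>i<k. of_bool (\<omega> i) :: real) \<le> c} =
         measure_pmf.prob (Pi_pmf {..<k} d (\<lambda>_. bernoulli_pmf q)) {h. (\<Sum>i<k. of_bool (h i) :: real) \<le> c}"
proof -
  interpret PP: product_prob_space "\<lambda>_::nat. measure_pmf (bernoulli_pmf q)" UNIV
    by (rule pps)
  let ?B = "measure_pmf (bernoulli_pmf q)"
  let ?K = "{..<k}"
  let ?N = "PiM ?K (\<lambda>_. ?B)"
  let ?P = "Pi_pmf ?K d (\<lambda>_. bernoulli_pmf q)"
  define E where "E = {h \<in> space ?N. (\<Sum>i<k. of_bool (h i) :: real) \<le> c}"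
  have meas: "(\<lambda>h. (\<Sum>i<k. of_bool (h i) :: real)) \<in> borel_measurable ?N"
    by measurable
  have E: "E \<in> sets ?N" unfolding E_def using meas by measurable
  have spN: "space ?N = PiE ?K (\<lambda>_. UNIV)" by (simp add: space_PiM)
  have dM: "distr (Mq q) ?N (\<lambda>\<omega>. restrict \<omega> ?K) = ?N"
    unfolding Mq_def by (rule PP.distr_PiM_restrict_finite) auto
  have rM: "(\<lambda>\<omega>. restrict \<omega> ?K) \<in> measurable (Mq q) ?N"
    unfolding Mq_def by (rule measurable_restrict_subset) auto
  have "measure (Mq q) {\<omega> \<in> space (Mq q). (\<Sum>i<k. of_bool (\<omega> i) :: real) \<le> c}
      = measure (Mq q) ((\<lambda>\<omega>. restrict \<omega> ?K) -` E \<inter> space (Mq q))"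
    by (intro arg_cong[where f="measure (Mq q)"]) (auto simp: E_def spN restrict_Collect_aux)
  also have "\<dots> = measure (distr (Mq q) ?N (\<lambda>\<omega>. restrict \<omega> ?K)) E"
    by (rule measure_distr[OF rM E, symmetric])
  also have "\<dots> = measure ?N E" using dM by simp
  finally have lhs: "measure (Mq q) {\<omega> \<in> space (Mq q). (\<Sum>i<k. of_bool (\<omega> i) :: real) \<le> c} = measure ?N E" .

  let ?C = "PiM ?K (\<lambda>_. count_space (UNIV :: bool set))"
  have sC: "sets ?C = sets ?N" by (intro sets_PiM_cong) auto
  have ind: "prob_space.indep_vars (measure_pmf ?P) (\<lambda>_. count_space UNIV) (\<lambda>x f. f x) ?K"
    by (rule indep_vars_Pi_pmf) simp
  have "distr (measure_pmf ?P) ?C (\<lambda>x. \<lambda>i\<in>?K. x i) =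
        PiM ?K (\<lambda>i. distr (measure_pmf ?P) (count_space UNIV) (\<lambda>f. f i))"
    using ind prob_space.indep_vars_iff_distr_eq_PiM'[of "measure_pmf ?P" ?K "\<lambda>x f. f x" "\<lambda>_. count_space UNIV"] measure_pmf.prob_space_axioms k
    by auto
  also have "\<dots> = ?N"
  proof (rule PiM_cong)
    fix i assume "i \<in> ?K"
    thus "distr (measure_pmf ?P) (count_space UNIV) (\<lambda>f. f i) = ?B"
      by (simp add: map_pmf_rep_eq[symmetric] Pi_pmf_component)
  qed simp
  finally have dP: "distr (measure_pmf ?P) ?C (\<lambda>x. restrict x ?K) = ?N" by simp
  have rP: "(\<lambda>x. restrict x ?K) \<in> measurable (measure_pmf ?P) ?C" by (simp add: space_PiM)
  have "measure_pmf.prob ?P {h. (\<Sum>i<k. of_bool (h i) :: real) \<le> c}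
      = measure_pmf.prob ?P ((\<lambda>x. restrict x ?K) -` E \<inter> space (measure_pmf ?P))"
    by (intro arg_cong[where f="measure_pmf.prob ?P"]) (auto simp: E_def spN restrict_Collect_aux)
  also have "\<dots> = measure (distr (measure_pmf ?P) ?C (\<lambda>x. restrict x ?K)) E"
    by (rule measure_distr[OF rP, symmetric]) (use E sC in simp)
  also have "\<dots> = measure ?N E" using dP by simp
  finally show ?thesis using lhs by simp
qed




lemma bern_int:
  assumes "0 \<le> q" "q \<le> 1"
  shows "integral\<^sup>L (measure_pmf (bernoulli_pmf q)) (f :: bool \<Rightarrow> real) = q * f True + (1 - q) * f False"
proof -
  have "integral\<^sup>L (measure_pmf (bernoulli_pmf q)) f = (\<Sum>a\<in>UNIV. f a * pmf (bernoulli_pmf q) a)"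
    by (rule integral_measure_pmf_real) auto
  also have "\<dots> = q * f True + (1 - q) * f False"
    using assms by (simp add: UNIV_bool)
  finally show ?thesis .
qed

lemma std_cont: "isCont (cdf std_normal_distribution) y"
proof -
  interpret real_distribution std_normal_distribution by (rule real_dist_normal_dist)
  have ae: "AE x in lborel. x \<notin> {y}"
    by (rule AE_not_in) (simp add: countable_imp_null_set_lborel)
  have "{y} \<in> null_sets std_normal_distribution"
    apply (subst null_sets_density_iff)
     apply simp
    apply (intro conjI)
     apply simp
    apply (rule eventually_mono[OF ae])
    apply simp
    done
  hence "measure std_normal_distribution {y} = 0" by (simp add: Sigma_Algebra.measure_def null_setsD1)
  thus ?thesis by (simp add: isCont_cdf)
qed

lemma clt_bern:
  assumes q: "0 < q" "q < 1"
  shows "(\<lambda>k. measure (Mq q) {\<omega> \<in> space (Mq q). (\<Sum>i<k. of_bool (\<omega> i) :: real) \<le> real k * q + y * sqrt (real k * (q * (1 - q)))})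
           \<longlonglongrightarrow> cdf std_normal_distribution y"
proof -
  let ?B = "measure_pmf (bernoulli_pmf q)"
  interpret PP: product_prob_space "\<lambda>_::nat. ?B" UNIV by (rule pps)
  interpret M: prob_space "Mq q" by (rule ps_Mq)
  define X where "X = (\<lambda>i (\<omega>::nat \<Rightarrow> bool). (of_bool (\<omega> i) :: real))"
  define \<sigma> where "\<sigma> = sqrt (q * (1 - q))"
  have qq: "q * (1 - q) > 0" using q by simp
  have \<sigma>pos: "\<sigma> > 0" using qq by (simp add: \<sigma>_def)
  have \<sigma>2: "\<sigma>\<^sup>2 = q * (1 - q)" using qq by (simp add: \<sigma>_def)
  have comp: "\<And>i. distr (Mq q) ?B (\<lambda>\<omega>. \<omega> i) = ?B"
    unfolding Mq_def by (rule PP.PiM_component) simp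
  have cm[measurable]: "\<And>i. (\<lambda>\<omega>. \<omega> i) \<in> measurable (Mq q) ?B"
    unfolding Mq_def by (rule measurable_component_singleton) simp
  have cm': "\<And>i. (\<lambda>\<omega>. \<omega> i) \<in> measurable (Mq q) (count_space UNIV)"
    using cm by (simp only: measurable_pmf_measure2)
  have ind0: "M.indep_vars (\<lambda>_. ?B) (\<lambda>i \<omega>. \<omega> i) UNIV"
  proof (subst M.indep_vars_iff_distr_eq_PiM')
    show "distr (Mq q) (Pi\<^sub>M UNIV (\<lambda>i. ?B)) (\<lambda>x. restrict (\<lambda>i. x i) UNIV) =
          Pi\<^sub>M UNIV (\<lambda>i. distr (Mq q) ?B (\<lambda>x. x i))"
      by (simp add: restrict_UNIV comp Mq_def[symmetric])
  qed (use cm' in simp_all)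
  have ind: "M.indep_vars (\<lambda>_. borel) X UNIV"
    unfolding X_def by (rule M.indep_vars_compose2[OF ind0]) simp
  have intd: "\<And>i (g :: bool \<Rightarrow> real). integral\<^sup>L (Mq q) (\<lambda>\<omega>. g (\<omega> i)) = q * g True + (1 - q) * g False"
  proof -
    fix i and g :: "bool \<Rightarrow> real"
    have "integral\<^sup>L (Mq q) (\<lambda>\<omega>. g (\<omega> i)) = integral\<^sup>L (distr (Mq q) ?B (\<lambda>\<omega>. \<omega> i)) g"
      by (rule integral_distr[symmetric]) (simp_all add: cm')
    also have "\<dots> = q * g True + (1 - q) * g False" using q by (simp add: comp bern_int)
    finally show "integral\<^sup>L (Mq q) (\<lambda>\<omega>. g (\<omega> i)) = q * g True + (1 - q) * g False" .
  qed
  have mean: "\<And>n. M.expectation (X n) = q"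
    using intd[of "\<lambda>b. of_bool b"] by (simp add: X_def)
  have sqi: "\<And>n. integrable (Mq q) (\<lambda>x. (X n x)\<^sup>2)"
  proof -
    fix n
    show "integrable (Mq q) (\<lambda>x. (X n x)\<^sup>2)"
    proof (rule M.integrable_const_bound[where B=1])
      show "AE x in Mq q. norm ((X n x)\<^sup>2) \<le> 1" by (auto simp: X_def)
      have "(\<lambda>x. (\<lambda>b. (of_bool b :: real)\<^sup>2) (x n)) \<in> borel_measurable (Mq q)"
        by (rule measurable_compose[OF cm'[of n]]) simp
      thus "(\<lambda>x. (X n x)\<^sup>2) \<in> borel_measurable (Mq q)" by (simp add: X_def)
    qed
  qed
  have var: "\<And>n. M.variance (X n) = \<sigma>\<^sup>2"
  proof -
    fix n
    have "M.variance (X n) = integral\<^sup>L (Mq q) (\<lambda>\<omega>. (of_bool (\<omega> n) - q)\<^sup>2)"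
      using mean[of n] by (simp add: X_def)
    also have "\<dots> = q * (1 - q)\<^sup>2 + (1 - q) * q\<^sup>2"
      using intd[of "\<lambda>b. (of_bool b - q)\<^sup>2" n] by simp
    also have "\<dots> = q * (1 - q)" by (simp add: power2_eq_square algebra_simps)
    also have "\<dots> = \<sigma>\<^sup>2" by (simp add: \<sigma>2)
    finally show "M.variance (X n) = \<sigma>\<^sup>2" .
  qed
  have dist: "\<And>n. distr (Mq q) borel (X n) = distr ?B borel (\<lambda>b. of_bool b)"
  proof -
    fix n
    have "distr ?B borel (\<lambda>b. of_bool b) = distr (distr (Mq q) ?B (\<lambda>\<omega>. \<omega> n)) borel (\<lambda>b. of_bool b)"
      by (simp add: comp)
    also have "\<dots> = distr (Mq q) borel (X n)"
      by (subst distr_distr) (auto simp: X_def o_def cm')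
    finally show "distr (Mq q) borel (X n) = distr ?B borel (\<lambda>b. of_bool b)" by simp
  qed
  have wc: "weak_conv_m (\<lambda>n. distr (Mq q) borel (\<lambda>x. (\<Sum>i<n. X i x - q) / sqrt (n * \<sigma>\<^sup>2))) std_normal_distribution"
    by (rule M.central_limit_theorem[OF ind mean \<sigma>pos sqi var dist])
  hence lim: "(\<lambda>n. cdf (distr (Mq q) borel (\<lambda>x. (\<Sum>i<n. X i x - q) / sqrt (n * \<sigma>\<^sup>2))) y) \<longlonglongrightarrow> cdf std_normal_distribution y"
    using std_cont unfolding weak_conv_m_def weak_conv_def by blast
  show ?thesis
  proof (rule Lim_transform_eventually[OF lim])
    show "\<forall>\<^sub>F n in sequentially. cdf (distr (Mq q) borel (\<lambda>x. (\<Sum>i<n. X i x - q) / sqrt (n * \<sigma>\<^sup>2))) y =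
       measure (Mq q) {\<omega> \<in> space (Mq q). (\<Sum>i<n. of_bool (\<omega> i) :: real) \<le> real n * q + y * sqrt (real n * (q * (1 - q)))}"
      unfolding eventually_sequentially
    proof (intro exI[of _ 1] allI impI)
      fix n :: nat assume n: "1 \<le> n"
      let ?g = "\<lambda>x. (\<Sum>i<n. X i x - q) / sqrt (n * \<sigma>\<^sup>2)"
      have Xm: "\<And>i. X i \<in> borel_measurable (Mq q)"
      proof -
        fix i
        have "(\<lambda>x. (\<lambda>b. (of_bool b :: real)) (x i)) \<in> borel_measurable (Mq q)"
          by (rule measurable_compose[OF cm'[of i]]) simp
        thus "X i \<in> borel_measurable (Mq q)" by (simp add: X_def)
      qed
      have gm: "?g \<in> borel_measurable (Mq q)"
        using Xm by (intro borel_measurable_divide borel_measurable_sum borel_measurable_diff borel_measurable_const) auto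
      have sp: "sqrt (n * \<sigma>\<^sup>2) > 0" using n \<sigma>pos by simp
      have s2: "sqrt (n * \<sigma>\<^sup>2) = sqrt (real n * (q * (1 - q)))" by (simp add: \<sigma>2)
      have "cdf (distr (Mq q) borel ?g) y = measure (distr (Mq q) borel ?g) {..y}"
        by (simp add: cdf_def)
      also have "\<dots> = measure (Mq q) (?g -` {..y} \<inter> space (Mq q))"
        by (rule measure_distr[OF gm]) simp
      also have "?g -` {..y} \<inter> space (Mq q) = {\<omega> \<in> space (Mq q). (\<Sum>i<n. of_bool (\<omega> i) :: real) \<le> real n * q + y * sqrt (real n * (q * (1 - q)))}"
      proof (rule set_eqI)
        fix \<omega>
        have "(\<Sum>i<n. X i \<omega> - q) = (\<Sum>i<n. of_bool (\<omega> i) :: real) - real n * q"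
          by (simp add: X_def sum_subtractf)
        hence "?g \<omega> \<le> y \<longleftrightarrow> (\<Sum>i<n. of_bool (\<omega> i) :: real) - real n * q \<le> y * sqrt (n * \<sigma>\<^sup>2)"
          using sp by (simp add: pos_divide_le_eq)
        thus "\<omega> \<in> ?g -` {..y} \<inter> space (Mq q) \<longleftrightarrow> \<omega> \<in> {\<omega> \<in> space (Mq q). (\<Sum>i<n. of_bool (\<omega> i) :: real) \<le> real n * q + y * sqrt (real n * (q * (1 - q)))}"
          using s2 by auto
      qed
      finally show "cdf (distr (Mq q) borel ?g) y = measure (Mq q) {\<omega> \<in> space (Mq q). (\<Sum>i<n. of_bool (\<omega> i) :: real) \<le> real n * q + y * sqrt (real n * (q * (1 - q)))}" .
    qed
  qed
qed




lemma polya: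
  fixes F :: "nat \<Rightarrow> real \<Rightarrow> real" and G :: "real \<Rightarrow> real" and \<epsilon> :: real
  assumes mono: "\<And>n x y. x \<le> y \<Longrightarrow> F n x \<le> F n y"
    and bnd: "\<And>n x. 0 \<le> F n x \<and> F n x \<le> 1"
    and lim: "\<And>x. (\<lambda>n. F n x) \<longlonglongrightarrow> G x"
    and Gmono: "\<And>x y. x \<le> y \<Longrightarrow> G x \<le> G y"
    and Gbnd: "\<And>x. 0 \<le> G x \<and> G x \<le> 1"
    and Gcont: "\<And>x. isCont G x"
    and Gbot: "(G \<longlongrightarrow> 0) at_bot" and Gtop: "(G \<longlongrightarrow> 1) at_top"
    and e: "\<epsilon> > 0"
  shows "\<exists>N. \<forall>n\<ge>N. \<forall>x. \<bar>F n x - G x\<bar> < \<epsilon>"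
proof -
  define e where "e = \<epsilon> / 2"
  have e0: "e > 0" using e by (simp add: e_def)
  have "\<forall>\<^sub>F x in at_bot. G x < e"
    using Gbot e0 by (rule order_tendstoD)
  then obtain a where Ga: "\<And>x. x \<le> a \<Longrightarrow> G x < e"
    unfolding eventually_at_bot_linorder by blast
  have "1 - e < 1" using e0 by simp
  hence "\<forall>\<^sub>F x in at_top. G x > 1 - e"
    by (rule order_tendstoD(1)[OF Gtop])
  then obtain b0 where Gb0: "\<And>x. x \<ge> b0 \<Longrightarrow> G x > 1 - e"
    unfolding eventually_at_top_linorder by blast
  define b where "b = max b0 (a + 1)"
  have ab: "a < b" by (simp add: b_def)
  have Gb: "G b > 1 - e" using Gb0 by (simp add: b_def)
  have "continuous_on {a..b} G"
    using Gcont by (simp add: continuous_at_imp_continuous_on)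
  hence "uniformly_continuous_on {a..b} G"
    by (rule compact_uniformly_continuous) simp
  then obtain d where d0: "d > 0" and dG: "\<And>u v. u \<in> {a..b} \<Longrightarrow> v \<in> {a..b} \<Longrightarrow> dist v u < d \<Longrightarrow> dist (G v) (G u) < e"
    unfolding uniformly_continuous_on_def using e0 by metis
  define m :: nat where "m = nat \<lceil>(b - a) / d\<rceil> + 1"
  have m0: "m > 0" by (simp add: m_def)
  define h where "h = (b - a) / m"
  have h0: "h > 0" using ab m0 by (simp add: h_def)
  have hd: "h < d"
  proof -
    have "(b - a) / d < m" unfolding m_def by linarith
    hence "b - a < m * d" using d0 by (simp add: divide_less_eq)
    thus ?thesis using m0 d0 by (simp add: h_def divide_less_eq mult.commute)
  qed
  define t where "t j = a + real j * h" for j :: nat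
  have tm: "t m = b" using m0 by (simp add: t_def h_def)
  have tin: "\<And>j. j \<le> m \<Longrightarrow> t j \<in> {a..b}"
  proof -
    fix j assume j: "j \<le> m"
    have "real j * h \<le> real m * h" using j h0 by (intro mult_right_mono) auto
    thus "t j \<in> {a..b}" using h0 tm by (auto simp: t_def)
  qed
  have ev: "\<forall>\<^sub>F n in sequentially. \<forall>j\<in>{..m}. \<bar>F n (t j) - G (t j)\<bar> < e"
  proof (rule eventually_ball_finite)
    show "\<forall>j\<in>{..m}. \<forall>\<^sub>F n in sequentially. \<bar>F n (t j) - G (t j)\<bar> < e"
    proof
      fix j
      have "((\<lambda>n. F n (t j) - G (t j)) \<longlonglongrightarrow> 0)"
        using tendsto_diff[OF lim[of "t j"] tendsto_const[of "G (t j)"]] by simp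
      hence "\<forall>\<^sub>F n in sequentially. norm (F n (t j) - G (t j)) < e"
        using e0 by (rule order_tendstoD(2)[OF tendsto_norm_zero]) 
      thus "\<forall>\<^sub>F n in sequentially. \<bar>F n (t j) - G (t j)\<bar> < e" by simp
    qed
  qed simp
  then obtain N where N: "\<And>n j. n \<ge> N \<Longrightarrow> j \<le> m \<Longrightarrow> \<bar>F n (t j) - G (t j)\<bar> < e"
    unfolding eventually_sequentially by blast
  have "\<forall>n\<ge>N. \<forall>x. \<bar>F n x - G x\<bar> < \<epsilon>"
  proof (intro allI impI)
    fix n x assume n: "n \<ge> N"
    have Ft0: "\<bar>F n a - G a\<bar> < e" using N[OF n, of 0] by (simp add: t_def)
    have Ftm: "\<bar>F n b - G b\<bar> < e" using N[OF n, of m] tm by simp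
    show "\<bar>F n x - G x\<bar> < \<epsilon>"
    proof (cases "x < a")
      case True
      have "F n x \<le> F n a" using True mono by simp
      moreover have "G x \<le> G a" using True Gmono by simp
      moreover have "G a < e" using Ga by simp
      ultimately show ?thesis using Ft0 bnd[of n x] Gbnd[of x] by (simp only: abs_less_iff e_def, elim conjE, intro conjI; linarith)
    next
      case False
      show ?thesis
      proof (cases "x \<ge> b")
        case True
        have "F n b \<le> F n x" using True mono by simp
        moreover have "G b \<le> G x" using True Gmono by simp
        ultimately show ?thesis using Ftm Gb bnd[of n x] Gbnd[of x] by (simp only: abs_less_iff e_def, elim conjE, intro conjI; linarith)
      next
        case False2: False
        define j where "j = nat \<lfloor>(x - a) / h\<rfloor>"
        have xa: "(x - a) / h \<ge> 0" using \<open>\<not> x < a\<close> h0 by simp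
        have xb: "(x - a) / h < m"
        proof -
          have "x - a < b - a" using False2 by simp
          hence "(x - a) / h < (b - a) / h" using h0 by (simp add: divide_strict_right_mono)
          also have "(b - a) / h = m" using h0 m0 ab by (simp add: h_def)
          finally show ?thesis .
        qed
        have j1: "real j \<le> (x - a) / h" using xa by (simp add: j_def)
        have j2: "(x - a) / h < real j + 1" using xa by (simp add: j_def)
        have jm: "j < m" using j1 j2 xb xa unfolding j_def by linarith
        have tj: "t j \<le> x" using j1 h0 by (simp add: t_def pos_le_divide_eq algebra_simps)
        have tj1: "x < t (Suc j)" using j2 h0 by (simp add: t_def pos_divide_less_eq algebra_simps)
        have dist: "dist (t (Suc j)) (t j) < d" using hd h0 by (simp add: t_def dist_real_def algebra_simps)
        have Gd: "G (t (Suc j)) - G (t j) < e"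
          using dG[OF tin[of j] tin[of "Suc j"] dist] jm by (simp add: dist_real_def)
        have "F n x \<le> F n (t (Suc j))" using tj1 mono by simp
        moreover have "F n (t j) \<le> F n x" using tj mono by simp
        moreover have "G (t j) \<le> G x" using tj Gmono by simp
        moreover have "G x \<le> G (t (Suc j))" using tj1 Gmono by simp
        moreover have "\<bar>F n (t j) - G (t j)\<bar> < e" using N[OF n] jm by simp
        moreover have "\<bar>F n (t (Suc j)) - G (t (Suc j))\<bar> < e" using N[OF n] jm by simp
        ultimately show ?thesis using Gd by (simp only: abs_less_iff e_def, elim conjE, intro conjI; linarith)
      qed
    qed
  qed
  thus ?thesis by blast
qed




lemma alg:
  fixes S p x \<sigma> :: real and n :: nat
  assumes n: "n > 0" and \<sigma>: "\<sigma> > 0"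
  shows "sqrt (real n) * ((1 / real n) * S - p) / \<sigma> \<le> x \<longleftrightarrow> S \<le> real n * p + x * \<sigma> * sqrt (real n)"
proof -
  have sn: "sqrt (real n) > 0" using n by simp
  have nn: "real n = sqrt (real n) * sqrt (real n)" by simp
  have r: "sqrt (real n) * ((1 / real n) * S - p) = (S - real n * p) / sqrt (real n)"
    using sn by (subst (1 2) nn) (simp add: field_simps)
  have "sqrt (real n) * ((1 / real n) * S - p) / \<sigma> \<le> x \<longleftrightarrow> sqrt (real n) * ((1 / real n) * S - p) \<le> x * \<sigma>"
    by (rule pos_divide_le_eq[OF \<sigma>])
  also have "\<dots> \<longleftrightarrow> (S - real n * p) / sqrt (real n) \<le> x * \<sigma>"
    by (simp only: r)
  also have "\<dots> \<longleftrightarrow> S - real n * p \<le> x * \<sigma> * sqrt (real n)"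
    using sn by (simp add: pos_divide_le_eq)
  finally show ?thesis by linarith
qed

definition Hs :: "nat \<Rightarrow> nat \<Rightarrow> real \<Rightarrow> real" where
  "Hs s k c = measure_pmf.prob (Pi_pmf {..<k} (flow1 s undefined) (\<lambda>_. bernoulli_pmf (qf s)))
                {h. (\<Sum>i<k. of_bool (h i) :: real) \<le> c}"

lemma Hs_mono: "c \<le> c' \<Longrightarrow> Hs s k c \<le> Hs s k c'"
  unfolding Hs_def by (rule measure_pmf.finite_measure_mono) auto

lemma Hs_lim:
  assumes s: "s \<ge> 2"
  shows "(\<lambda>k. Hs s k (real k * qf s + y * sqrt (real k * (qf s * (1 - qf s))))) \<longlonglongrightarrow> cdf std_normal_distribution y"
proof (rule Lim_transform_eventually[OF clt_bern[OF qf_bounds[OF s]]])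
  show "\<forall>\<^sub>F k in sequentially.
     measure (Mq (qf s)) {\<omega> \<in> space (Mq (qf s)). (\<Sum>i<k. of_bool (\<omega> i) :: real) \<le> real k * qf s + y * sqrt (real k * (qf s * (1 - qf s)))} =
     Hs s k (real k * qf s + y * sqrt (real k * (qf s * (1 - qf s))))"
    unfolding eventually_sequentially Hs_def
    by (intro exI[of _ 1] allI impI bridge) simp
qed

lemma Fn_bounds:
  fixes x :: real
  assumes s: "s \<ge> 2" and n: "n = Suc k"
  defines "T \<equiv> real n * qf s + x * sqrt (qf s * (1 - qf s)) * sqrt (real n)"
  shows "Hs s k (T - 1) \<le> Fn n s x" "Fn n s x \<le> Hs s k T"
proof -
  have \<sigma>: "sqrt (qf s * (1 - qf s)) > 0" using qf_bounds[OF s] by simp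
  define S where "S f = (\<Sum>i<k. of_bool (flows s f i) :: real)" for f
  have Sn: "\<And>f. (\<Sum>i<n. if flows s f i then 1 else 0 :: real) = S f + of_bool (flows s f k)"
    by (simp add: n S_def of_bool_def)
  have ev: "{f. Zn n s f \<le> x} = {f. S f + of_bool (flows s f k) \<le> T}"
  proof (rule set_eqI)
    fix f
    have z: "Zn n s f = sqrt (real n) * ((1 / real n) * (\<Sum>i<n. if flows s f i then 1 else 0 :: real) - qf s) / sqrt (qf s * (1 - qf s))"
      unfolding Zn_def Xbar_def p_flow_eq by (rule refl)
    have "Zn n s f \<le> x \<longleftrightarrow> (\<Sum>i<n. if flows s f i then 1 else 0 :: real) \<le> T"
      unfolding z T_def by (rule alg[OF _ \<sigma>]) (simp add: n)
    thus "f \<in> {f. Zn n s f \<le> x} \<longleftrightarrow> f \<in> {f. S f + of_bool (flows s f k) \<le> T}"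
      using Sn by simp
  qed
  have F: "Fn n s x = measure_pmf.prob (Pu n s) {f. S f + of_bool (flows s f k) \<le> T}"
    unfolding Fn_def ev ..
  have H: "\<And>c. Hs s k c = measure_pmf.prob (Pu n s) {f. S f \<le> c}"
    unfolding Hs_def S_def using prob_sum[OF s n] by simp
  have "measure_pmf.prob (Pu n s) {f. S f \<le> T - 1} \<le> measure_pmf.prob (Pu n s) {f. S f + of_bool (flows s f k) \<le> T}"
    by (rule measure_pmf.finite_measure_mono) auto
  thus "Hs s k (T - 1) \<le> Fn n s x" using F H by simp
  have "measure_pmf.prob (Pu n s) {f. S f + of_bool (flows s f k) \<le> T} \<le> measure_pmf.prob (Pu n s) {f. S f \<le> T}"
    by (rule measure_pmf.finite_measure_mono) auto
  thus "Fn n s x \<le> Hs s k T" using F H by simp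
qed




lemma Fn_lim:
  fixes x :: real
  assumes s: "s \<ge> 2"
  shows "(\<lambda>n. Fn n s x) \<longlonglongrightarrow> cdf std_normal_distribution x"
proof (rule LIMSEQ_I)
  fix r :: real assume r: "r > 0"
  let ?\<Phi> = "cdf std_normal_distribution"
  define q where "q = qf s"
  define \<sigma> where "\<sigma> = sqrt (q * (1 - q))"
  have q01: "0 < q" "q < 1" using qf_bounds[OF s] by (simp_all add: q_def)
  have \<sigma>0: "\<sigma> > 0" using q01 by (simp add: \<sigma>_def)
  have "?\<Phi> \<midarrow>x\<rightarrow> ?\<Phi> x" using std_cont[of x] by (simp add: isCont_def)
  then obtain d where d0: "d > 0" and dd: "\<And>z. z \<noteq> x \<Longrightarrow> norm (z - x) < d \<Longrightarrow> norm (?\<Phi> z - ?\<Phi> x) < r / 2"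
    unfolding LIM_eq using r by (metis half_gt_zero)
  define \<delta> where "\<delta> = d / 2"
  have \<delta>0: "\<delta> > 0" using d0 by (simp add: \<delta>_def)
  have "norm (?\<Phi> (x + \<delta>) - ?\<Phi> x) < r / 2"
    using dd[of "x + \<delta>"] \<delta>0 d0 by (simp add: \<delta>_def)
  hence up: "?\<Phi> (x + \<delta>) < ?\<Phi> x + r / 2"
    by (simp only: real_norm_def abs_less_iff) linarith
  have "norm (?\<Phi> (x - \<delta>) - ?\<Phi> x) < r / 2"
    using dd[of "x - \<delta>"] \<delta>0 d0 by (simp add: \<delta>_def)
  hence lo: "?\<Phi> (x - \<delta>) > ?\<Phi> x - r / 2"
    by (simp only: real_norm_def abs_less_iff) linarith
  obtain K1 where K1: "\<And>k. k \<ge> K1 \<Longrightarrow> norm (Hs s k (real k * q + (x + \<delta>) * sqrt (real k * (q * (1 - q)))) - ?\<Phi> (x + \<delta>)) < r / 2"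
    using LIMSEQ_D[OF Hs_lim[OF s, of "x + \<delta>"], of "r / 2"] r unfolding q_def by auto
  obtain K2 where K2: "\<And>k. k \<ge> K2 \<Longrightarrow> norm (Hs s k (real k * q + (x - \<delta>) * sqrt (real k * (q * (1 - q)))) - ?\<Phi> (x - \<delta>)) < r / 2"
    using LIMSEQ_D[OF Hs_lim[OF s, of "x - \<delta>"], of "r / 2"] r unfolding q_def by auto
  define R where "R = (1 + \<bar>x\<bar> * \<sigma>) / (\<delta> * \<sigma>)"
  have R0: "R > 0" using \<delta>0 \<sigma>0 by (simp add: R_def add_pos_nonneg)
  define K3 where "K3 = nat \<lceil>R\<^sup>2\<rceil> + 1"
  show "\<exists>no. \<forall>n\<ge>no. norm (Fn n s x - ?\<Phi> x) < r"
  proof (intro exI[of _ "Suc (max K1 (max K2 K3))"] allI impI)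
    fix n assume n: "n \<ge> Suc (max K1 (max K2 K3))"
    define k where "k = n - 1"
    have nk: "n = Suc k" using n by (simp add: k_def)
    have kK: "k \<ge> K1" "k \<ge> K2" "k \<ge> K3" using n by (auto simp: k_def)
    have kR: "real k \<ge> R\<^sup>2" using kK(3) unfolding K3_def by linarith
    have sk: "sqrt (real k) \<ge> R"
    proof -
      have "sqrt (R\<^sup>2) \<le> sqrt (real k)" using kR by (rule real_sqrt_le_mono)
      thus ?thesis using R0 by simp
    qed
    define D where "D = sqrt (real k + 1) - sqrt (real k)"
    have D0: "D \<ge> 0" by (simp add: D_def)
    have D1: "D \<le> 1" using sqrt_add_le_add_sqrt[of "real k" 1] by (simp add: D_def)
    define A where "A = x * \<sigma> * D"
    have A: "\<bar>A\<bar> \<le> \<bar>x\<bar> * \<sigma>"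
    proof -
      have "\<bar>A\<bar> = \<bar>x\<bar> * \<sigma> * D" using \<sigma>0 D0 by (simp add: A_def abs_mult)
      also have "\<dots> \<le> \<bar>x\<bar> * \<sigma> * 1" using D1 \<sigma>0 by (intro mult_left_mono) auto
      finally show ?thesis by simp
    qed
    have big: "\<delta> * \<sigma> * sqrt (real k) \<ge> 1 + \<bar>x\<bar> * \<sigma>"
    proof -
      have "\<delta> * \<sigma> * R \<le> \<delta> * \<sigma> * sqrt (real k)" using sk \<delta>0 \<sigma>0 by (intro mult_left_mono) auto
      moreover have "\<delta> * \<sigma> * R = 1 + \<bar>x\<bar> * \<sigma>" using \<delta>0 \<sigma>0 by (simp add: R_def)
      ultimately show ?thesis by simp
    qed
    have sq: "sqrt (real k * (q * (1 - q))) = sqrt (real k) * \<sigma>" by (simp add: \<sigma>_def real_sqrt_mult)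
    define T where "T = real n * q + x * \<sigma> * sqrt (real n)"
    have Te: "T = real k * q + q + x * \<sigma> * sqrt (real k) + A"
      by (simp add: T_def nk A_def D_def algebra_simps)
    have Tup: "T \<le> real k * q + (x + \<delta>) * sqrt (real k * (q * (1 - q)))"
    proof -
      have "(x + \<delta>) * sqrt (real k * (q * (1 - q))) = x * \<sigma> * sqrt (real k) + \<delta> * \<sigma> * sqrt (real k)"
        unfolding sq by (simp add: algebra_simps)
      thus ?thesis using Te A big q01 by linarith
    qed
    have Tlo: "T - 1 \<ge> real k * q + (x - \<delta>) * sqrt (real k * (q * (1 - q)))"
    proof -
      have "(x - \<delta>) * sqrt (real k * (q * (1 - q))) = x * \<sigma> * sqrt (real k) - \<delta> * \<sigma> * sqrt (real k)"
        unfolding sq by (simp add: algebra_simps)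
      thus ?thesis using Te A big q01 by linarith
    qed
    have FB: "Hs s k (T - 1) \<le> Fn n s x" "Fn n s x \<le> Hs s k T"
      using Fn_bounds[OF s nk, of x] unfolding T_def q_def \<sigma>_def by auto
    have "Fn n s x \<le> Hs s k (real k * q + (x + \<delta>) * sqrt (real k * (q * (1 - q))))"
      using FB(2) Hs_mono[OF Tup, of s k] by linarith
    moreover have "Fn n s x \<ge> Hs s k (real k * q + (x - \<delta>) * sqrt (real k * (q * (1 - q))))"
      using FB(1) Hs_mono[OF Tlo, of s k] by linarith
    moreover note K1[OF kK(1)] K2[OF kK(2)] up lo
    ultimately show "norm (Fn n s x - ?\<Phi> x) < r"
      by (simp only: real_norm_def abs_less_iff, elim conjE, intro conjI; linarith)
  qed
qed

theorem theorem1: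
  fixes s :: nat
  assumes "s \<ge> 2"
  shows "\<forall>\<epsilon>>0. \<exists>N\<ge>2. \<forall>n\<ge>N. \<forall>x::real.
           \<bar>Fn n s x - cdf std_normal_distribution x\<bar> < \<epsilon>"
proof (intro allI impI)
  fix \<epsilon> :: real assume e: "\<epsilon> > 0"
  interpret RD: real_distribution std_normal_distribution by (rule real_dist_normal_dist)
  have "\<exists>N. \<forall>n\<ge>N. \<forall>x. \<bar>Fn n s x - cdf std_normal_distribution x\<bar> < \<epsilon>"
  proof (rule polya)
    show "\<And>n x y. x \<le> y \<Longrightarrow> Fn n s x \<le> Fn n s y"
      unfolding Fn_def by (rule measure_pmf.finite_measure_mono) auto
    show "\<And>n x. 0 \<le> Fn n s x \<and> Fn n s x \<le> 1"
      unfolding Fn_def by simp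
    show "\<And>x. (\<lambda>n. Fn n s x) \<longlonglongrightarrow> cdf std_normal_distribution x"
      by (rule Fn_lim[OF assms])
    show "\<And>x y. x \<le> y \<Longrightarrow> cdf std_normal_distribution x \<le> cdf std_normal_distribution y"
      by (rule RD.cdf_nondecreasing)
    show "\<And>x. 0 \<le> cdf std_normal_distribution x \<and> cdf std_normal_distribution x \<le> 1"
      by (simp add: RD.cdf_nonneg RD.cdf_bounded_prob)
    show "\<And>x. isCont (cdf std_normal_distribution) x" by (rule std_cont)
    show "(cdf std_normal_distribution \<longlongrightarrow> 0) at_bot" by (rule RD.cdf_lim_at_bot)
    show "(cdf std_normal_distribution \<longlongrightarrow> 1) at_top" by (rule RD.cdf_lim_at_top_prob)
  qed (rule e)
  then obtain N where N: "\<forall>n\<ge>N. \<forall>x. \<bar>Fn n s x - cdf std_normal_distribution x\<bar> < \<epsilon>" by blast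
  show "\<exists>N\<ge>2. \<forall>n\<ge>N. \<forall>x::real. \<bar>Fn n s x - cdf std_normal_distribution x\<bar> < \<epsilon>"
    using N by (intro exI[of _ "max N 2"]) auto
qed


end
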